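(* Let $\gamma<\delta$, $c>0$, $g(t)=c(\delta-t)$ on $[\gamma,\delta]$, and let $0<\alpha<\beta$. Let $s\in(\gamma,\delta)$ and let $\varphi:[\gamma,\delta]\to[0,\infty)$ be a concave function with $\varphi(t)>0$ for all $t\in[\gamma,s]$. Then \[\frac{\int_\gamma^{s} t\,\varphi(t)^{\alpha-\beta}g(t)^\beta\,dt}{\int_\gamma^{s} \varphi(t)^{\alpha-\beta}g(t)^\beta\,dt}\leq\frac{\int_\gamma^{s} t\,(\delta-t)^{\alpha-\beta}g(t)^\beta\,dt}{\int_\gamma^{s} (\delta-t)^{\alpha-\beta}g(t)^\beta\,dt}=\frac{\int_\gamma^{s} t\,(\delta-t)^{\alpha}\,dt}{\int_\gamma^{s} (\delta-t)^{\alpha}\,dt}.\] *)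

theory Defs
  imports "HOL-Analysis.Analysis"
begin

end

theory Submission
  imports Defs
begin

lemma prod_integrable:
  fixes h r :: "real \<Rightarrow> real"
  assumes "continuous_on {a..b} h" "r absolutely_integrable_on {a..b}"
  shows "(\<lambda>x. h x * r x) integrable_on {a..b}"
proof -
  have "bounded (h ` {a..b})"
    using assms(1) by (intro compact_imp_bounded compact_continuous_image) auto
  moreover have "h \<in> borel_measurable (lebesgue_on {a..b})"
    using assms(1) by (intro continuous_imp_measurable_on_sets_lebesgue) auto
  ultimately have "(\<lambda>x. h x * r x) absolutely_integrable_on {a..b}"
    using assms(2) by (intro absolutely_integrable_bounded_measurable_product_real) auto
  then show ?thesis using absolutely_integrable_on_def by blast
qed

theorem mainTheorem9:
  fixes \<gamma> \<delta> c \<alpha> \<beta> s :: real and g \<phi> :: "real \<Rightarrow> real"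
  assumes "\<gamma> < \<delta>" and "c > 0"
    and g_def: "\<forall>t\<in>{\<gamma>..\<delta>}. g t = c * (\<delta> - t)"
    and "0 < \<alpha>" and "\<alpha> < \<beta>"
    and "\<gamma> < s" and "s < \<delta>"
    and "concave_on {\<gamma>..\<delta>} \<phi>"
    and "\<forall>t\<in>{\<gamma>..\<delta>}. \<phi> t \<ge> 0"
    and "\<forall>t\<in>{\<gamma>..s}. \<phi> t > 0"
  shows "integral {\<gamma>..s} (\<lambda>t. t * \<phi> t powr (\<alpha> - \<beta>) * g t powr \<beta>)
           / integral {\<gamma>..s} (\<lambda>t. \<phi> t powr (\<alpha> - \<beta>) * g t powr \<beta>)
         \<le> integral {\<gamma>..s} (\<lambda>t. t * (\<delta> - t) powr (\<alpha> - \<beta>) * g t powr \<beta>)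
           / integral {\<gamma>..s} (\<lambda>t. (\<delta> - t) powr (\<alpha> - \<beta>) * g t powr \<beta>)
       \<and> integral {\<gamma>..s} (\<lambda>t. t * (\<delta> - t) powr (\<alpha> - \<beta>) * g t powr \<beta>)
           / integral {\<gamma>..s} (\<lambda>t. (\<delta> - t) powr (\<alpha> - \<beta>) * g t powr \<beta>)
         = integral {\<gamma>..s} (\<lambda>t. t * (\<delta> - t) powr \<alpha>)
           / integral {\<gamma>..s} (\<lambda>t. (\<delta> - t) powr \<alpha>)"
proof -
  define K where "K = c powr \<beta>"
  have K: "K > 0" using assms(2) by (simp add: K_def)
  define w where "w t = (\<delta> - t) powr \<alpha>" for t
  define r where "r t = (\<phi> t / (\<delta> - t)) powr (\<alpha> - \<beta>)" for t
  have phipos: "\<phi> t > 0" if "t \<in> {\<gamma>..s}" for t using assms(10) that by blast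
  have dpos: "\<delta> - t > 0" if "t \<in> {\<gamma>..s}" for t using that assms(7) by auto
  have eq1: "\<phi> t powr (\<alpha> - \<beta>) * g t powr \<beta> = K * (r t * w t)" if "t \<in> {\<gamma>..s}" for t
  proof -
    have gt: "g t = c * (\<delta> - t)" using g_def that assms(7) by auto
    have "\<phi> t powr (\<alpha> - \<beta>) = r t * (\<delta> - t) powr (\<alpha> - \<beta>)"
      using phipos[OF that] dpos[OF that] by (simp add: r_def powr_divide)
    moreover have "(c * (\<delta> - t)) powr \<beta> = K * (\<delta> - t) powr \<beta>"
      using assms(2) dpos[OF that] by (simp add: K_def powr_mult)
    moreover have "(\<delta> - t) powr (\<alpha> - \<beta>) * (\<delta> - t) powr \<beta> = w t"
      using dpos[OF that] by (simp add: w_def flip: powr_add)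
    ultimately show ?thesis using gt by (metis mult.commute mult.left_commute)
  qed
  have eq2: "(\<delta> - t) powr (\<alpha> - \<beta>) * g t powr \<beta> = K * w t" if "t \<in> {\<gamma>..s}" for t
  proof -
    have gt: "g t = c * (\<delta> - t)" using g_def that assms(7) by auto
    have "(c * (\<delta> - t)) powr \<beta> = K * (\<delta> - t) powr \<beta>"
      using assms(2) dpos[OF that] by (simp add: K_def powr_mult)
    moreover have "(\<delta> - t) powr (\<alpha> - \<beta>) * (\<delta> - t) powr \<beta> = w t"
      using dpos[OF that] by (simp add: w_def flip: powr_add)
    ultimately show ?thesis using gt by (metis mult.commute mult.left_commute)
  qed
  define A where "A = integral {\<gamma>..s} w"
  define B where "B = integral {\<gamma>..s} (\<lambda>t. t * w t)"
  define A' where "A' = integral {\<gamma>..s} (\<lambda>t. w t * r t)"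
  define B' where "B' = integral {\<gamma>..s} (\<lambda>t. (t * w t) * r t)"
  have I1: "integral {\<gamma>..s} (\<lambda>t. t * \<phi> t powr (\<alpha> - \<beta>) * g t powr \<beta>) = K * B'"
  proof -
    have "integral {\<gamma>..s} (\<lambda>t. t * \<phi> t powr (\<alpha> - \<beta>) * g t powr \<beta>)
        = integral {\<gamma>..s} (\<lambda>t. K * ((t * w t) * r t))"
      by (rule integral_cong) (simp only: mult.assoc eq1, simp add: algebra_simps)
    then show ?thesis by (simp add: B'_def)
  qed
  have I2: "integral {\<gamma>..s} (\<lambda>t. \<phi> t powr (\<alpha> - \<beta>) * g t powr \<beta>) = K * A'"
  proof -
    have "integral {\<gamma>..s} (\<lambda>t. \<phi> t powr (\<alpha> - \<beta>) * g t powr \<beta>)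
        = integral {\<gamma>..s} (\<lambda>t. K * (w t * r t))"
      by (rule integral_cong) (simp only: eq1, simp add: algebra_simps)
    then show ?thesis by (simp add: A'_def)
  qed
  have I3: "integral {\<gamma>..s} (\<lambda>t. t * (\<delta> - t) powr (\<alpha> - \<beta>) * g t powr \<beta>) = K * B"
  proof -
    have "integral {\<gamma>..s} (\<lambda>t. t * (\<delta> - t) powr (\<alpha> - \<beta>) * g t powr \<beta>)
        = integral {\<gamma>..s} (\<lambda>t. K * (t * w t))"
      by (rule integral_cong) (simp only: mult.assoc eq2, simp add: algebra_simps)
    then show ?thesis by (simp add: B_def)
  qed
  have I4: "integral {\<gamma>..s} (\<lambda>t. (\<delta> - t) powr (\<alpha> - \<beta>) * g t powr \<beta>) = K * A"
  proof -
    have "integral {\<gamma>..s} (\<lambda>t. (\<delta> - t) powr (\<alpha> - \<beta>) * g t powr \<beta>)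
        = integral {\<gamma>..s} (\<lambda>t. K * w t)"
      by (rule integral_cong) (simp add: eq2)
    then show ?thesis by (simp add: A_def)
  qed
  have I5: "integral {\<gamma>..s} (\<lambda>t. t * (\<delta> - t) powr \<alpha>) = B" by (simp add: B_def w_def)
  have I6: "integral {\<gamma>..s} (\<lambda>t. (\<delta> - t) powr \<alpha>) = A" by (simp add: A_def w_def[abs_def])
  have wc: "continuous_on {\<gamma>..s} w"
    unfolding w_def using assms(7) by (intro continuous_intros) auto
  have twc: "continuous_on {\<gamma>..s} (\<lambda>t. t * w t)"
    by (intro continuous_intros wc)
  have qmono: "\<phi> t / (\<delta> - t) \<le> \<phi> u / (\<delta> - u)" if "\<gamma> \<le> t" "t \<le> u" "u \<le> s" for t u
  proof -
    define l where "l = (u - t) / (\<delta> - t)"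
    have dt: "\<delta> - t > 0" "\<delta> - u > 0" using that assms(7) by auto
    have l0: "0 \<le> l" "l \<le> 1" using that dt by (auto simp: l_def field_simps)
    have ld: "l * (\<delta> - t) = u - t" using dt by (simp add: l_def)
    have pt: "(1 - l) *\<^sub>R t + l *\<^sub>R \<delta> = u"
    proof -
      have "(1 - l) *\<^sub>R t + l *\<^sub>R \<delta> = t + l * (\<delta> - t)" by (simp add: algebra_simps)
      then show ?thesis using ld by simp
    qed
    have "(1 - l) * \<phi> t + l * \<phi> \<delta> \<le> \<phi> ((1 - l) *\<^sub>R t + l *\<^sub>R \<delta>)"
      using concave_onD[OF assms(8) l0] that assms(1,7) by auto
    then have "(1 - l) * \<phi> t + l * \<phi> \<delta> \<le> \<phi> u" using pt by simp
    moreover have "l * \<phi> \<delta> \<ge> 0" using l0 assms(1,9) by auto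
    ultimately have "(1 - l) * \<phi> t \<le> \<phi> u" by linarith
    moreover have "1 - l = (\<delta> - u) / (\<delta> - t)" using dt by (simp add: l_def field_simps)
    ultimately have "(\<delta> - u) / (\<delta> - t) * \<phi> t \<le> \<phi> u" by simp
    then show ?thesis using dt by (simp add: field_simps)
  qed
  have rmono: "r u \<le> r t" if "\<gamma> \<le> t" "t \<le> u" "u \<le> s" for t u
    unfolding r_def
    by (rule powr_mono2') (use that assms(5) qmono phipos dpos in auto)
  have rpos: "r t > 0" if "t \<in> {\<gamma>..s}" for t using phipos[OF that] dpos[OF that] by (simp add: r_def)
  have rs: "r s > 0" using rpos assms(6) by auto
  have rint: "r integrable_on {\<gamma>..s}"
  proof -
    have "mono_on {\<gamma>..s} (\<lambda>t. - r t)"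
      by (auto simp: mono_on_def intro!: rmono)
    then have "(\<lambda>t. - r t) integrable_on {\<gamma>..s}" by (rule integrable_on_mono_on)
    then show ?thesis using integrable_neg by fastforce
  qed
  have rabs: "r absolutely_integrable_on {\<gamma>..s}"
    using rint rpos by (intro nonnegative_absolutely_integrable_1) (auto intro: less_imp_le)
  have wr_int: "(\<lambda>t. w t * r t) integrable_on {\<gamma>..s}" by (rule prod_integrable[OF wc rabs])
  have twr_int: "(\<lambda>t. (t * w t) * r t) integrable_on {\<gamma>..s}" by (rule prod_integrable[OF twc rabs])
  have w_int: "w integrable_on {\<gamma>..s}" by (rule integrable_continuous_interval[OF wc])
  have tw_int: "(\<lambda>t. t * w t) integrable_on {\<gamma>..s}" by (rule integrable_continuous_interval[OF twc])
  have wlow: "w t \<ge> (\<delta> - s) powr \<alpha>" if "t \<in> {\<gamma>..s}" for t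
    unfolding w_def using that assms(4,7) by (intro powr_mono2) auto
  have Apos: "A > 0"
  proof -
    have "integral {\<gamma>..s} (\<lambda>t. (\<delta> - s) powr \<alpha>) \<le> A"
      unfolding A_def by (rule integral_le) (use wlow w_int in auto)
    moreover have "integral {\<gamma>..s} (\<lambda>t. (\<delta> - s) powr \<alpha>) > 0"
      using assms(6,7) by simp
    ultimately show ?thesis by linarith
  qed
  have A'pos: "A' > 0"
  proof -
    have "integral {\<gamma>..s} (\<lambda>t. (\<delta> - s) powr \<alpha> * r s) \<le> A'"
      unfolding A'_def
    proof (rule integral_le)
      fix t assume t: "t \<in> {\<gamma>..s}"
      show "(\<delta> - s) powr \<alpha> * r s \<le> w t * r t"
        using wlow[OF t] rmono[of t s] t rs
        by (intro mult_mono) (auto intro: less_imp_le simp: w_def)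
    qed (use wr_int in auto)
    moreover have "integral {\<gamma>..s} (\<lambda>t. (\<delta> - s) powr \<alpha> * r s) > 0"
      using assms(6,7) rs by simp
    ultimately show ?thesis by linarith
  qed
  define m where "m = B / A"
  define C where "C = r (max \<gamma> (min s m))"
  have zero: "integral {\<gamma>..s} (\<lambda>t. t * w t - m * w t) = 0"
  proof -
    have "integral {\<gamma>..s} (\<lambda>t. t * w t - m * w t) = B - m * A"
    proof -
      have mw: "(\<lambda>t. m * w t) integrable_on {\<gamma>..s}" using integrable_on_cmult_left[OF w_int] by simp
      have "integral {\<gamma>..s} (\<lambda>t. t * w t - m * w t) = integral {\<gamma>..s} (\<lambda>t. t * w t) - integral {\<gamma>..s} (\<lambda>t. m * w t)"
        by (rule integral_diff[OF tw_int mw])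
      then show ?thesis by (simp add: B_def A_def)
    qed
    then show ?thesis using Apos by (simp add: m_def)
  qed
  have key: "B' - m * A' \<le> 0"
  proof -
    have "B' - m * A' = integral {\<gamma>..s} (\<lambda>t. (t * w t) * r t - m * (w t * r t))"
      using integral_diff[OF twr_int integrable_on_cmult_left[OF wr_int, of m]]
      by (simp add: B'_def A'_def)
    also have "\<dots> \<le> integral {\<gamma>..s} (\<lambda>t. C * (t * w t - m * w t))"
    proof (rule integral_le)
      show "(\<lambda>t. (t * w t) * r t - m * (w t * r t)) integrable_on {\<gamma>..s}"
        using integrable_diff[OF twr_int integrable_on_cmult_left[OF wr_int, of m]] by simp
      show "(\<lambda>t. C * (t * w t - m * w t)) integrable_on {\<gamma>..s}"
        using integrable_on_cmult_left[OF integrable_diff[OF tw_int integrable_on_cmult_left[OF w_int, of m]], of C] by simp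
      fix t assume t: "t \<in> {\<gamma>..s}"
      have w0: "w t \<ge> 0" by (simp add: w_def)
      have "(t - m) * (r t - C) \<le> 0"
      proof (cases "m \<le> t")
        case True
        then have "r t \<le> C" unfolding C_def using t by (intro rmono) auto
        then show ?thesis using True by (simp add: mult_nonneg_nonpos)
      next
        case False
        then have "C \<le> r t" unfolding C_def using t by (intro rmono) auto
        then show ?thesis using False by (simp add: mult_nonpos_nonneg)
      qed
      then have "w t * ((t - m) * (r t - C)) \<le> 0" using w0 by (simp add: mult_nonneg_nonpos)
      then show "(t * w t) * r t - m * (w t * r t) \<le> C * (t * w t - m * w t)"
        by (simp add: algebra_simps)
    qed
    also have "\<dots> = 0" using zero by simp
    finally show ?thesis .
  qed
  have ineq: "B' / A' \<le> B / A"
  proof -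
    have "B' \<le> m * A'" using key by linarith
    then have "B' / A' \<le> m" using A'pos by (simp add: pos_divide_le_eq)
    then show ?thesis by (simp add: m_def)
  qed
  show ?thesis
    unfolding I1 I2 I3 I4 I5 I6 using ineq K by simp
qed

end
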